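(* Suppose that both of the following hold: (i) for all positive integers $k,a$ such that neither $a$ nor $a+1$ is divisible by $k$, the Cayley digraph $\mathrm{Cay}(\mathbb{Z}_k;a,a+1)$ has two arc-disjoint hamiltonian paths; and (ii) for all positive integers $k,a$ such that $k$ is divisible by $2a+1$ and neither $a$ nor $a+1$ is divisible by $k$, the Cayley digraph $\mathrm{Cay}(\mathbb{Z}_k;-a,a+1)$ has two arc-disjoint hamiltonian paths. Then for every finite abelian group $G$ and every $2$-element generating set $\{a,b\}$ of $G$ with $a$ and $b$ nontrivial, $\mathrm{Cay}(G;a,b)$ has two arc-disjoint hamiltonian paths.
   Context: For an abelian group $G$ and $a,b\in G$, the Cayley digraph $\mathrm{Cay}(G;a,b)$ has vertex set $G$ and an arc from $v$ to $v+s$ for every $v\in G$ and $s\in\{a,b\}$. A hamiltonian path is a directed path visiting every vertex exactly once; arc-disjoint means sharing no arc. *)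

theory Defs
  imports Main
begin

text \<open>A Cayley digraph Cay(G; a, b) on vertex set V is given by the two step maps
  f v = v + a and g v = v + b.  Arcs are labelled by the generator used
  (False = first generator, True = second generator), so an arc is a pair
  (v, label) and goes from v to (if label then g else f) v.\<close>

definition ham_path :: "'v set \<Rightarrow> ('v \<Rightarrow> 'v) \<Rightarrow> ('v \<Rightarrow> 'v) \<Rightarrow> 'v list \<times> bool list \<Rightarrow> bool" where
  "ham_path V f g P \<longleftrightarrow>
     distinct (fst P) \<and> set (fst P) = V \<and> length (snd P) + 1 = length (fst P) \<and>
     (\<forall>i < length (snd P). fst P ! Suc i = (if snd P ! i then g else f) (fst P ! i))"

definition path_arcs :: "'v list \<times> bool list \<Rightarrow> ('v \<times> bool) set" where
  "path_arcs P = {(fst P ! i, snd P ! i) | i. i < length (snd P)}"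

definition two_arc_disjoint_ham_paths :: "'v set \<Rightarrow> ('v \<Rightarrow> 'v) \<Rightarrow> ('v \<Rightarrow> 'v) \<Rightarrow> bool" where
  "two_arc_disjoint_ham_paths V f g \<longleftrightarrow>
     (\<exists>P Q. ham_path V f g P \<and> ham_path V f g Q \<and> path_arcs P \<inter> path_arcs Q = {})"

definition cay_Zk :: "int \<Rightarrow> int \<Rightarrow> int \<Rightarrow> bool" where
  "cay_Zk k s t \<longleftrightarrow> two_arc_disjoint_ham_paths {0..<k} (\<lambda>v. (v + s) mod k) (\<lambda>v. (v + t) mod k)"

definition cay_grp :: "'g::ab_group_add \<Rightarrow> 'g \<Rightarrow> bool" where
  "cay_grp a b \<longleftrightarrow> two_arc_disjoint_ham_paths (UNIV :: 'g set) (\<lambda>v. v + a) (\<lambda>v. v + b)"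

inductive_set gen_subgroup :: "'g::ab_group_add set \<Rightarrow> 'g set" for S where
  zero: "0 \<in> gen_subgroup S"
| gen: "s \<in> S \<Longrightarrow> s \<in> gen_subgroup S"
| add: "x \<in> gen_subgroup S \<Longrightarrow> y \<in> gen_subgroup S \<Longrightarrow> x + y \<in> gen_subgroup S"
| neg: "x \<in> gen_subgroup S \<Longrightarrow> - x \<in> gen_subgroup S"

end

theory Submission
  imports Defs
begin

fun walk :: "('v \<Rightarrow> 'v) \<Rightarrow> ('v \<Rightarrow> 'v) \<Rightarrow> 'v list \<Rightarrow> bool list \<Rightarrow> bool" where
  "walk f g [] ls = False"
| "walk f g [v] ls = (ls = [])"
| "walk f g (v # w # vs) ls = (case ls of [] \<Rightarrow> False | l # ls' \<Rightarrow> w = (if l then g else f) v \<and> walk f g (w # vs) ls')"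

lemma walk_iff:
  "walk f g vs ls \<longleftrightarrow> (length ls + 1 = length vs \<and> (\<forall>i < length ls. vs ! Suc i = (if ls ! i then g else f) (vs ! i)))"
proof (induction f g vs ls rule: walk.induct)
  case (1 f g ls)
  then show ?case by simp
next
  case (2 f g v ls)
  then show ?case by auto
next
  case (3 f g v w vs ls)
  show ?case
  proof (cases ls)
    case Nil
    then show ?thesis by simp
  next
    case (Cons l ls')
    have "(\<forall>i < length ls. (v # w # vs) ! Suc i = (if ls ! i then g else f) ((v # w # vs) ! i))
       \<longleftrightarrow> (w = (if l then g else f) v \<and> (\<forall>i < length ls'. (w # vs) ! Suc i = (if ls' ! i then g else f) ((w # vs) ! i)))"
      (is "?L \<longleftrightarrow> ?R")
    proof
      assume L: ?L
      have "w = (if l then g else f) v" using L[rule_format, of 0] Cons by simp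
      moreover have "\<forall>i < length ls'. (w # vs) ! Suc i = (if ls' ! i then g else f) ((w # vs) ! i)"
      proof (intro allI impI)
        fix i assume "i < length ls'"
        then show "(w # vs) ! Suc i = (if ls' ! i then g else f) ((w # vs) ! i)"
          using L[rule_format, of "Suc i"] Cons by simp
      qed
      ultimately show ?R by blast
    next
      assume R: ?R
      show ?L
      proof (intro allI impI)
        fix i assume "i < length ls"
        then show "(v # w # vs) ! Suc i = (if ls ! i then g else f) ((v # w # vs) ! i)"
          using R Cons by (cases i) auto
      qed
    qed
    then show ?thesis using Cons 3 by auto
  qed
qed

lemma ham_path_walk:
  "ham_path V f g (vs, ls) \<longleftrightarrow> distinct vs \<and> set vs = V \<and> walk f g vs ls"
  unfolding ham_path_def walk_iff by auto

lemma path_arcs_zip: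
  assumes "length ls + 1 = length vs"
  shows "path_arcs (vs, ls) = set (zip vs ls)"
  using assms unfolding path_arcs_def set_zip by auto

lemma ham_len: "ham_path V f g P \<Longrightarrow> length (snd P) + 1 = length (fst P)"
  unfolding ham_path_def by auto

lemma two_iff:
  "two_arc_disjoint_ham_paths V f g \<longleftrightarrow>
    (\<exists>vs ls vs' ls'. ham_path V f g (vs, ls) \<and> ham_path V f g (vs', ls') \<and> set (zip vs ls) \<inter> set (zip vs' ls') = {})"
proof
  assume "two_arc_disjoint_ham_paths V f g"
  then obtain P Q where "ham_path V f g P" "ham_path V f g Q" "path_arcs P \<inter> path_arcs Q = {}"
    unfolding two_arc_disjoint_ham_paths_def by blast
  then show "\<exists>vs ls vs' ls'. ham_path V f g (vs, ls) \<and> ham_path V f g (vs', ls') \<and> set (zip vs ls) \<inter> set (zip vs' ls') = {}"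
    by (metis ham_len path_arcs_zip prod.collapse)
next
  assume "\<exists>vs ls vs' ls'. ham_path V f g (vs, ls) \<and> ham_path V f g (vs', ls') \<and> set (zip vs ls) \<inter> set (zip vs' ls') = {}"
  then show "two_arc_disjoint_ham_paths V f g"
    unfolding two_arc_disjoint_ham_paths_def
    by (metis ham_len path_arcs_zip fst_conv snd_conv)
qed

lemma ham_map:
  assumes bij: "bij_betw \<phi> V W"
    and cf: "\<And>v. v \<in> V \<Longrightarrow> \<phi> (f v) = f' (\<phi> v)"
    and cg: "\<And>v. v \<in> V \<Longrightarrow> \<phi> (g v) = g' (\<phi> v)"
    and h: "ham_path V f g (vs, ls)"
  shows "ham_path W f' g' (map \<phi> vs, ls)"
proof -
  have d: "distinct vs" and s: "set vs = V" and len: "length ls + 1 = length vs"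
    and st: "\<And>i. i < length ls \<Longrightarrow> vs ! Suc i = (if ls ! i then g else f) (vs ! i)"
    using h unfolding ham_path_def by auto
  have inj: "inj_on \<phi> V" using bij bij_betw_def by blast
  have "distinct (map \<phi> vs)" using d inj s by (simp add: distinct_map)
  moreover have "set (map \<phi> vs) = W" using s bij by (simp add: bij_betw_def)
  moreover have "\<forall>i < length ls. map \<phi> vs ! Suc i = (if ls ! i then g' else f') (map \<phi> vs ! i)"
  proof (intro allI impI)
    fix i assume i: "i < length ls"
    have iv: "vs ! i \<in> V" using i len s nth_mem by (metis Suc_eq_plus1 less_SucI)
    show "map \<phi> vs ! Suc i = (if ls ! i then g' else f') (map \<phi> vs ! i)"
      using i len st[OF i] cf[OF iv] cg[OF iv] by auto
  qed
  ultimately show ?thesis using len unfolding ham_path_def by auto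
qed

lemma iso_transfer:
  assumes bij: "bij_betw \<phi> V W"
    and cf: "\<And>v. v \<in> V \<Longrightarrow> \<phi> (f v) = f' (\<phi> v)"
    and cg: "\<And>v. v \<in> V \<Longrightarrow> \<phi> (g v) = g' (\<phi> v)"
    and h: "two_arc_disjoint_ham_paths V f g"
  shows "two_arc_disjoint_ham_paths W f' g'"
proof -
  obtain vs ls vs' ls' where h1: "ham_path V f g (vs, ls)" and h2: "ham_path V f g (vs', ls')"
    and dj: "set (zip vs ls) \<inter> set (zip vs' ls') = {}"
    using h unfolding two_iff by blast
  have inj: "inj_on \<phi> V" using bij bij_betw_def by blast
  have s1: "set vs = V" "set vs' = V" using h1 h2 unfolding ham_path_def by auto
  have z: "\<And>xs ys. set (zip (map \<phi> xs) ys) = (\<lambda>(x,y). (\<phi> x, y)) ` set (zip xs ys)"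
    by (simp add: zip_map1)
  have "set (zip (map \<phi> vs) ls) \<inter> set (zip (map \<phi> vs') ls') = {}"
  proof (rule ccontr)
    assume "set (zip (map \<phi> vs) ls) \<inter> set (zip (map \<phi> vs') ls') \<noteq> {}"
    then obtain x y l where xy: "(x, l) \<in> set (zip vs ls)" "(y, l) \<in> set (zip vs' ls')" "\<phi> x = \<phi> y"
      unfolding z by auto
    have "x \<in> V" "y \<in> V" using xy(1,2) s1 set_zip_leftD by metis+
    then have "x = y" using inj xy(3) inj_on_def by metis
    then show False using xy dj by auto
  qed
  then show ?thesis unfolding two_iff
    using ham_map[OF bij cf cg h1] ham_map[OF bij cf cg h2] by blast
qed

lemma iso_transfer_rev:
  assumes bij: "bij_betw \<phi> V W"
    and cf: "\<And>v. v \<in> V \<Longrightarrow> \<phi> (f v) = f' (\<phi> v)"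
    and cg: "\<And>v. v \<in> V \<Longrightarrow> \<phi> (g v) = g' (\<phi> v)"
    and fV: "\<And>v. v \<in> V \<Longrightarrow> f v \<in> V"
    and gV: "\<And>v. v \<in> V \<Longrightarrow> g v \<in> V"
    and h: "two_arc_disjoint_ham_paths W f' g'"
  shows "two_arc_disjoint_ham_paths V f g"
proof (rule iso_transfer[OF bij_betw_inv_into[OF bij] _ _ h])
  fix w assume w: "w \<in> W"
  define v where "v = inv_into V \<phi> w"
  have v: "v \<in> V" "\<phi> v = w" using w bij unfolding v_def
    by (auto simp: bij_betw_def inv_into_into f_inv_into_f)
  have inj: "inj_on \<phi> V" using bij bij_betw_def by blast
  show "inv_into V \<phi> (f' w) = f (inv_into V \<phi> w)"
    using v cf[OF v(1)] fV[OF v(1)] inj unfolding v_def[symmetric] by (metis inv_into_f_f)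
  show "inv_into V \<phi> (g' w) = g (inv_into V \<phi> w)"
    using v cg[OF v(1)] gV[OF v(1)] inj unfolding v_def[symmetric] by (metis inv_into_f_f)
qed

lemma swap_labels:
  assumes h: "two_arc_disjoint_ham_paths V f g"
  shows "two_arc_disjoint_ham_paths V g f"
proof -
  obtain vs ls vs' ls' where h1: "ham_path V f g (vs, ls)" and h2: "ham_path V f g (vs', ls')"
    and dj: "set (zip vs ls) \<inter> set (zip vs' ls') = {}"
    using h unfolding two_iff by blast
  have hm: "ham_path V g f (xs, map Not ys)" if "ham_path V f g (xs, ys)" for xs ys
    using that unfolding ham_path_def by auto
  have z: "\<And>xs ys. set (zip xs (map Not ys)) = (\<lambda>(x,y). (x, \<not> y)) ` set (zip xs ys)"
    by (simp add: zip_map2)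
  have "set (zip vs (map Not ls)) \<inter> set (zip vs' (map Not ls')) = {}"
    using dj unfolding z by auto
  then show ?thesis unfolding two_iff using hm[OF h1] hm[OF h2] by blast
qed


lemma modeq: "(a::int) = b + n * k \<Longrightarrow> a mod n = b mod n" by simp


definition torV :: "int \<Rightarrow> int \<Rightarrow> (int \<times> int) set" where
  "torV m n = {0..<m} \<times> {0..<n}"
definition tor_a :: "int \<Rightarrow> int \<Rightarrow> int \<Rightarrow> int \<times> int \<Rightarrow> int \<times> int" where
  "tor_a m n z p = (if fst p + 1 < m then (fst p + 1, snd p) else (0, (snd p + z) mod n))"
definition tor_b :: "int \<Rightarrow> int \<Rightarrow> int \<Rightarrow> int \<times> int \<Rightarrow> int \<times> int" where
  "tor_b m n z p = (if fst p + 1 < m then (fst p + 1, (snd p + 1) mod n) else (0, (snd p + z + 1) mod n))"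
definition good :: "int \<Rightarrow> int \<Rightarrow> int \<Rightarrow> bool" where
  "good m n z \<longleftrightarrow> two_arc_disjoint_ham_paths (torV m n) (tor_a m n z) (tor_b m n z)"

lemma tor_a_in: "0 < n \<Longrightarrow> v \<in> torV m n \<Longrightarrow> tor_a m n z v \<in> torV m n"
  unfolding torV_def tor_a_def by (cases v) auto
lemma tor_b_in: "0 < n \<Longrightarrow> v \<in> torV m n \<Longrightarrow> tor_b m n z v \<in> torV m n"
  unfolding torV_def tor_b_def by (cases v) auto

lemma good1:
  assumes n: "n > 0" and c: "cay_Zk n t (t + 1)" and tz: "t mod n = z mod n"
  shows "good 1 n z"
  unfolding good_def
proof (rule iso_transfer[where \<phi> = "\<lambda>j. (0, j)"])
  show "two_arc_disjoint_ham_paths {0..<n} (\<lambda>v. (v + t) mod n) (\<lambda>v. (v + (t + 1)) mod n)"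
    using c unfolding cay_Zk_def .
  show "bij_betw (\<lambda>j. (0::int, j)) {0..<n} (torV 1 n)"
    unfolding torV_def by (auto simp: bij_betw_def inj_on_def)
  fix v :: int
  have e: "(v + t) mod n = (v + z) mod n" by (metis mod_add_right_eq tz)
  have e2: "(v + (t + 1)) mod n = (v + z + 1) mod n"
    by (metis (no_types, lifting) add.assoc add.commute mod_add_right_eq tz)
  show "(0, (v + t) mod n) = tor_a 1 n z (0, v)" unfolding tor_a_def using e by simp
  show "(0, (v + (t + 1)) mod n) = tor_b 1 n z (0, v)" unfolding tor_b_def using e2 by simp
qed

lemma good_sym:
  assumes n: "n > 0" and g: "good m n z"
  shows "good m n (- z - m)"
proof -
  define \<phi> where "\<phi> = (\<lambda>p::int\<times>int. (fst p, (fst p - snd p) mod n))"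
  have inv: "\<phi> (\<phi> p) = p" if "p \<in> torV m n" for p
    using that n unfolding \<phi>_def torV_def by (cases p) (auto simp: mod_diff_right_eq)
  have into: "\<phi> p \<in> torV m n" if "p \<in> torV m n" for p
    using that n unfolding \<phi>_def torV_def by (cases p) auto
  have bij: "bij_betw \<phi> (torV m n) (torV m n)"
    by (rule bij_betw_byWitness[where f' = \<phi>]) (use inv into in auto)
  have s: "two_arc_disjoint_ham_paths (torV m n) (tor_b m n z) (tor_a m n z)"
    using swap_labels g unfolding good_def by blast
  show ?thesis unfolding good_def
  proof (rule iso_transfer[OF bij _ _ s])
    fix v assume v: "v \<in> torV m n"
    obtain i j where ij: "v = (i, j)" by (cases v)
    show "\<phi> (tor_b m n z v) = tor_a m n (- z - m) (\<phi> v)"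
    proof (cases "i + 1 < m")
      case True
      then show ?thesis unfolding ij \<phi>_def tor_a_def tor_b_def
        by (simp add: mod_simps)
    next
      case False
      then have "i = m - 1" using v ij unfolding torV_def by auto
      moreover have "((0::int) - (j + z + 1) mod n) mod n = ((m - 1 - j) mod n + (- z - m)) mod n"
        by (simp add: mod_simps algebra_simps)
      ultimately show ?thesis using False unfolding ij \<phi>_def tor_a_def tor_b_def
        by simp
    qed
    show "\<phi> (tor_a m n z v) = tor_b m n (- z - m) (\<phi> v)"
    proof (cases "i + 1 < m")
      case True
      then show ?thesis unfolding ij \<phi>_def tor_a_def tor_b_def
        by (simp add: mod_simps algebra_simps)
    next
      case False
      then have "i = m - 1" using v ij unfolding torV_def by auto
      moreover have "((0::int) - (j + z) mod n) mod n = ((m - 1 - j) mod n + (- z - m) + 1) mod n"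
        apply (rule modeq[where k = "(j+z) div n + (m - 1 - j) div n"])
        apply (simp add: algebra_simps minus_div_mult_eq_mod[symmetric])
        done
      ultimately show ?thesis using False unfolding ij \<phi>_def tor_a_def tor_b_def
        by simp
    qed
  qed
qed

lemma good_H2:
  fixes al n :: int
  assumes al: "al > 0" and n: "n > 0" and c: "cay_Zk ((2*al+1)*n) (- al) (al + 1)"
  shows "good (2*al+1) n (- al)"
proof -
  define m where "m = 2*al+1"
  define k where "k = m * n"
  have m: "m > 0" "m > 1" unfolding m_def using al by auto
  have k: "k > 0" unfolding k_def using m n by auto
  define \<psi> where "\<psi> = (\<lambda>p::int\<times>int. (- al * fst p + m * snd p) mod k)"
  have cop: "coprime m al"
  proof -
    have "coprime (2*al+1) (2*al)" by (rule coprime_add_one_left)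
    then show ?thesis unfolding m_def by (simp add: coprime_mult_right_iff)
  qed
  have inj: "inj_on \<psi> (torV m n)"
  proof (rule inj_onI)
    fix p q assume p: "p \<in> torV m n" and q: "q \<in> torV m n" and e: "\<psi> p = \<psi> q"
    obtain i j where ij: "p = (i, j)" by (cases p)
    obtain i' j' where ij': "q = (i', j')" by (cases q)
    have r: "0 \<le> i" "i < m" "0 \<le> j" "j < n" "0 \<le> i'" "i' < m" "0 \<le> j'" "j' < n"
      using p q ij ij' unfolding torV_def by auto
    have "k dvd (- al * i + m * j) - (- al * i' + m * j')"
      using e unfolding \<psi>_def ij ij' by (simp add: mod_eq_dvd_iff)
    then have d1: "k dvd al * (i' - i) + m * (j - j')" by (simp add: algebra_simps)
    then have "m dvd al * (i' - i) + m * (j - j')" unfolding k_def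
      using dvd_mult_left by blast
    then have "m dvd al * (i' - i)" by (simp add: dvd_add_left_iff)
    then have "m dvd (i' - i)" using cop by (simp add: coprime_dvd_mult_right_iff)
    then have ii: "i' = i"
    proof -
      assume "m dvd (i' - i)"
      show "i' = i"
      proof (rule ccontr)
        assume "i' \<noteq> i"
        then have "\<bar>m\<bar> \<le> \<bar>i' - i\<bar>" using dvd_imp_le_int \<open>m dvd (i' - i)\<close> by auto
        then show False using r by auto
      qed
    qed
    then have "m * n dvd m * (j - j')" using d1 unfolding k_def by simp
    then have "n dvd (j - j')" using m by simp
    then have "j = j'"
    proof -
      assume dv: "n dvd (j - j')"
      show "j = j'"
      proof (rule ccontr)
        assume "j \<noteq> j'"
        then have "\<bar>n\<bar> \<le> \<bar>j - j'\<bar>" using dvd_imp_le_int dv by auto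
        then show False using r by auto
      qed
    qed
    then show "p = q" using ii ij ij' by simp
  qed
  have cardV: "card (torV m n) = nat k"
    unfolding torV_def k_def using m n by (simp add: card_cartesian_product nat_mult_distrib)
  have sub: "\<psi> ` torV m n \<subseteq> {0..<k}" unfolding \<psi>_def using k by auto
  have bij: "bij_betw \<psi> (torV m n) {0..<k}"
    unfolding bij_betw_def
  proof
    show "inj_on \<psi> (torV m n)" by (rule inj)
    have "card (\<psi> ` torV m n) = card {0..<k}" using card_image[OF inj] cardV by simp
    then show "\<psi> ` torV m n = {0..<k}" using sub by (simp add: card_subset_eq)
  qed
  have "two_arc_disjoint_ham_paths (torV m n) (tor_a m n (- al)) (tor_b m n (- al))"
  proof (rule iso_transfer_rev[OF bij])
    show "two_arc_disjoint_ham_paths {0..<k} (\<lambda>v. (v + - al) mod k) (\<lambda>v. (v + (al + 1)) mod k)"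
      using c unfolding cay_Zk_def k_def m_def .
    show "\<And>v. v \<in> torV m n \<Longrightarrow> tor_a m n (- al) v \<in> torV m n" using tor_a_in n by blast
    show "\<And>v. v \<in> torV m n \<Longrightarrow> tor_b m n (- al) v \<in> torV m n" using tor_b_in n by blast
  next
    fix v assume v: "v \<in> torV m n"
    obtain i j where ij: "v = (i, j)" by (cases v)
    have mm: "m * (x mod n) = (m * x) mod k" for x unfolding k_def by (simp add: mod_mult_mult1)
    show "\<psi> (tor_a m n (- al) v) = (\<psi> v + - al) mod k"
    proof (cases "i + 1 < m")
      case True
      then show ?thesis unfolding ij \<psi>_def tor_a_def by (simp add: mod_simps algebra_simps)
    next
      case False
      then have im: "i = m - 1" using v ij unfolding torV_def by auto
      have 1: "\<psi> (tor_a m n (- al) v) = (m * (j - al)) mod k"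
        using False unfolding ij \<psi>_def tor_a_def by (simp add: mm)
      have 2: "(\<psi> v + - al) mod k = (- al * (m - 1) + m * j - al) mod k"
        unfolding ij \<psi>_def im by (simp add: mod_simps)
      have 3: "m * (j - al) = - al * (m - 1) + m * j - al" by (simp add: algebra_simps)
      show ?thesis using 1 2 3 by simp
    qed
    show "\<psi> (tor_b m n (- al) v) = (\<psi> v + (al + 1)) mod k"
    proof (cases "i + 1 < m")
      case True
      have 1: "\<psi> (tor_b m n (- al) v) = (- al * (i + 1) + m * (j + 1)) mod k"
        using True unfolding ij \<psi>_def tor_b_def by (simp add: mm mod_simps)
      have 2: "(\<psi> v + (al + 1)) mod k = (- al * i + m * j + (al + 1)) mod k"
        unfolding ij \<psi>_def by (simp add: mod_simps)
      have 3: "- al * (i + 1) + m * (j + 1) = - al * i + m * j + (al + 1)"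
        unfolding m_def by (simp add: algebra_simps)
      show ?thesis using 1 2 3 by simp
    next
      case False
      then have im: "i = m - 1" using v ij unfolding torV_def by auto
      have 1: "\<psi> (tor_b m n (- al) v) = (m * (j - al + 1)) mod k"
        using False unfolding ij \<psi>_def tor_b_def by (simp add: mm)
      have 2: "(\<psi> v + (al + 1)) mod k = (- al * (m - 1) + m * j + (al + 1)) mod k"
        unfolding ij \<psi>_def im by (simp add: mod_simps)
      have 3: "m * (j - al + 1) = - al * (m - 1) + m * j + (al + 1)"
        unfolding m_def by (simp add: algebra_simps)
      show ?thesis using 1 2 3 by simp
    qed
  qed
  then show ?thesis unfolding good_def m_def .
qed


lemma small_dvd_zero:
  fixes d x :: int
  assumes "d dvd x" "\<bar>x\<bar> < d" shows "x = 0"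
proof (rule ccontr)
  assume "x \<noteq> 0"
  then have "\<bar>d\<bar> \<le> \<bar>x\<bar>" using assms(1) by (rule dvd_imp_le_int)
  then show False using assms(2) by linarith
qed

lemma nt_basic:
  fixes s n :: int
  assumes n: "n > 0"
  shows "gcd s n > 0" "n = gcd s n * (n div gcd s n)" "n div gcd s n > 0"
    "n dvd (n div gcd s n) * s" "coprime (n div gcd s n) (s div gcd s n)"
proof -
  show g: "gcd s n > 0" using n by simp
  show np: "n = gcd s n * (n div gcd s n)" by (rule dvd_mult_div_cancel[symmetric]) simp
  show "n div gcd s n > 0" using n g np zero_less_mult_pos by metis
  obtain s' where s': "s = gcd s n * s'" by (meson gcd_dvd1 dvdE)
  have "(n div gcd s n) * s = n * s'" by (subst np) (metis s' mult.commute mult.left_commute np)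
  then show "n dvd (n div gcd s n) * s" by simp
  have "coprime (s div gcd s n) (n div gcd s n)" using n by (intro div_gcd_coprime) simp
  then show "coprime (n div gcd s n) (s div gcd s n)" by (rule coprime_commute[THEN iffD1])
qed

lemma nt_p:
  fixes s n x :: int
  assumes n: "n > 0" and d: "n dvd x * s"
  shows "(n div gcd s n) dvd x"
proof -
  define g where "g = gcd s n"
  define p where "p = n div g"
  note b = nt_basic[where s=s and n=n, OF n, folded g_def, folded p_def]
  have gs: "g dvd s" and gn: "g dvd n" unfolding g_def by simp_all
  obtain s' where s': "s = g * s'" using gs by (rule dvdE)
  have xs: "x * s = g * (x * s')" unfolding s' by (simp only: ac_simps)
  have "g * p dvd g * (x * s')" using d unfolding xs by (subst (asm) b(2))
  then have "p dvd x * s'" using b(1) by simp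
  moreover have "s' = s div g" using s' b(1) by simp
  ultimately have "p dvd x" using b(5) by (simp add: coprime_dvd_mult_left_iff)
  then show ?thesis unfolding p_def g_def .
qed

lemma nt_inj:
  fixes s n i i' k k' :: int
  assumes n: "n > 0"
    and r: "0 \<le> i" "i < gcd s n" "0 \<le> i'" "i' < gcd s n" "0 \<le> k" "k < n div gcd s n" "0 \<le> k'" "k' < n div gcd s n"
    and d: "n dvd (i - i') + (k - k') * s \<or> n dvd (i' - i) + (k - k') * s"
  shows "i = i' \<and> k = k'"
proof -
  define g where "g = gcd s n"
  define p where "p = n div g"
  note b = nt_basic[where s=s and n=n, OF n, folded g_def, folded p_def]
  have gs: "g dvd s" and gn: "g dvd n" unfolding g_def by simp_all
  have gd: "g dvd (i - i') + (k - k') * s \<or> g dvd (i' - i) + (k - k') * s"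
    using d gn dvd_trans by blast
  have "g dvd (k - k') * s" using gs by simp
  then have "g dvd (i - i') \<or> g dvd (i' - i)" using gd by (simp add: dvd_add_left_iff)
  then have "g dvd (i - i')"
  proof
    assume "g dvd (i' - i)"
    then have "g dvd - (i' - i)" by (simp only: dvd_minus_iff)
    then show ?thesis by simp
  qed
  then have ii: "i = i'" using small_dvd_zero[of g "i - i'"] r unfolding g_def by auto
  then have "n dvd (k - k') * s" using d by simp
  then have "p dvd (k - k')" using nt_p[OF n] unfolding p_def g_def by blast
  then have "k = k'" using small_dvd_zero[of p "k - k'"] r unfolding p_def g_def by auto
  then show ?thesis using ii by simp
qed

lemma nt_disj:
  fixes s n i i' x :: int
  assumes n: "n > 0"
    and r: "0 \<le> i" "i < gcd s n" "0 \<le> i'" "i' < gcd s n" "0 < x" "x < n div gcd s n"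
    and d: "n dvd x * s - (i + i' + 1 - gcd s n) \<or> n dvd x * s + (i + i' + 1 - gcd s n)"
  shows False
proof -
  define g where "g = gcd s n"
  define p where "p = n div g"
  note b = nt_basic[where s=s and n=n, OF n, folded g_def, folded p_def]
  have gs: "g dvd s" and gn: "g dvd n" unfolding g_def by simp_all
  have dd: "n dvd x * s - (i + i' + 1 - g) \<or> n dvd x * s + (i + i' + 1 - g)" using d unfolding g_def .
  have gd: "g dvd x * s - (i + i' + 1 - g) \<or> g dvd x * s + (i + i' + 1 - g)"
    using dd gn dvd_trans by blast
  have "g dvd x * s" using gs by simp
  then have "g dvd (i + i' + 1 - g)" using gd
  proof -
    assume xs: "g dvd x * s"
    show ?thesis using gd
    proof
      assume "g dvd x * s - (i + i' + 1 - g)"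
      then have "g dvd x * s - (x * s - (i + i' + 1 - g))" using xs dvd_diff by blast
      then show ?thesis by (simp add: algebra_simps)
    next
      assume "g dvd x * s + (i + i' + 1 - g)"
      then have "g dvd (x * s + (i + i' + 1 - g)) - x * s" using xs dvd_diff by blast
      then show ?thesis by simp
    qed
  qed
  then have "g dvd (i + i' + 1 - g) + g" using dvd_add dvd_refl by blast
  then have "g dvd (i + i' + 1)" by simp
  then obtain c where c: "i + i' + 1 = g * c" by (rule dvdE)
  have r2: "i < g" "i' < g" using r unfolding g_def by auto
  have gc1: "0 < g * c" using c r(1,3) by linarith
  have gc2: "g * c < g * 2" using c r2 by linarith
  have "c > 0" using gc1 b(1) zero_less_mult_pos by blast
  moreover have "c < 2" using gc2 b(1) mult_less_cancel_left_pos by blast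
  ultimately have "c = 1" by simp
  then have "i + i' + 1 - g = 0" using c by simp
  then have "n dvd x * s" using dd by auto
  then have "p dvd x" using nt_p[OF n] unfolding p_def g_def by blast
  then show False using small_dvd_zero[of p x] r unfolding p_def g_def by auto
qed


lemma ham_path_fun:
  fixes h :: "nat \<Rightarrow> 'v" and lab :: "nat \<Rightarrow> bool"
  assumes N: "N > 0" and inj: "inj_on h {0..<N}" and sub: "h ` {0..<N} \<subseteq> V"
    and fin: "finite V" and card: "card V = N"
    and st: "\<And>q. Suc q < N \<Longrightarrow> h (Suc q) = (if lab q then g else f) (h q)"
  shows "ham_path V f g (map h [0..<N], map lab [0..<N - 1])"
    and "path_arcs (map h [0..<N], map lab [0..<N - 1]) = {(h q, lab q) | q. q < N - 1}"
proof -
  have "card (h ` {0..<N}) = N" using card_image[OF inj] by simp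
  then have im: "h ` {0..<N} = V" using sub fin card by (simp add: card_subset_eq)
  show "ham_path V f g (map h [0..<N], map lab [0..<N - 1])"
    unfolding ham_path_def using inj im N st by (auto simp: distinct_map nth_append)
  show "path_arcs (map h [0..<N], map lab [0..<N - 1]) = {(h q, lab q) | q. q < N - 1}"
    unfolding path_arcs_def
  proof (intro subset_antisym subsetI)
    fix x assume "x \<in> {(fst (map h [0..<N], map lab [0..<N - 1]) ! i, snd (map h [0..<N], map lab [0..<N - 1]) ! i) |i.
             i < length (snd (map h [0..<N], map lab [0..<N - 1]))}"
    then obtain i where "x = (map h [0..<N] ! i, map lab [0..<N - 1] ! i)" "i < N - 1" by auto
    then show "x \<in> {(h q, lab q) | q. q < N - 1}" by auto
  next
    fix x assume "x \<in> {(h q, lab q) | q. q < N - 1}"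
    then obtain q where q: "x = (h q, lab q)" "q < N - 1" by auto
    then have "x = (fst (map h [0..<N], map lab [0..<N - 1]) ! q, snd (map h [0..<N], map lab [0..<N - 1]) ! q)
       \<and> q < length (snd (map h [0..<N], map lab [0..<N - 1]))" by auto
    then show "x \<in> {(fst (map h [0..<N], map lab [0..<N - 1]) ! i, snd (map h [0..<N], map lab [0..<N - 1]) ! i) |i.
             i < length (snd (map h [0..<N], map lab [0..<N - 1]))}" by blast
  qed
qed

definition cI :: "int \<Rightarrow> nat \<Rightarrow> int" where "cI p q = int (q div 2 div nat p)"
definition cK :: "int \<Rightarrow> nat \<Rightarrow> int" where "cK p q = int (q div 2 mod nat p)"
definition cE :: "nat \<Rightarrow> int" where "cE q = int (q mod 2)"

lemma idx_even: "q mod 2 = 0 \<Longrightarrow> cI p (Suc q) = cI p q \<and> cK p (Suc q) = cK p q \<and> cE q = 0 \<and> cE (Suc q) = 1"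
  unfolding cI_def cK_def cE_def by (simp add: mod_Suc div_Suc)

lemma idx_odd_div: "q mod 2 = 1 \<Longrightarrow> Suc q div 2 = Suc (q div 2)" by presburger

lemma idx_odd1:
  assumes p: "p > 0" and q: "q mod 2 = 1" and k: "cK p q \<noteq> p - 1"
  shows "cI p (Suc q) = cI p q \<and> cK p (Suc q) = cK p q + 1 \<and> cE q = 1 \<and> cE (Suc q) = 0"
proof -
  define t where "t = q div 2"
  have st: "Suc q div 2 = Suc t" using idx_odd_div[OF q] unfolding t_def .
  have "t mod nat p < nat p" using p by simp
  moreover have "int (t mod nat p) \<noteq> p - 1" using k unfolding cK_def t_def .
  ultimately have ne: "Suc (t mod nat p) \<noteq> nat p" using p by linarith
  then have "Suc t mod nat p = Suc (t mod nat p)" by (simp add: mod_Suc)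
  moreover have "Suc t div nat p = t div nat p" using ne by (simp add: div_Suc mod_Suc)
  ultimately show ?thesis using q unfolding cI_def cK_def cE_def st t_def[symmetric]
    by (simp add: mod_Suc)
qed

lemma idx_odd2:
  assumes p: "p > 0" and q: "q mod 2 = 1" and k: "cK p q = p - 1"
  shows "cI p (Suc q) = cI p q + 1 \<and> cK p (Suc q) = 0 \<and> cE q = 1 \<and> cE (Suc q) = 0"
proof -
  define t where "t = q div 2"
  have st: "Suc q div 2 = Suc t" using idx_odd_div[OF q] unfolding t_def .
  have "int (t mod nat p) = p - 1" using k unfolding cK_def t_def .
  then have e: "Suc (t mod nat p) = nat p" using p by linarith
  then have "Suc t mod nat p = 0" by (simp add: mod_Suc)
  moreover have "Suc t div nat p = Suc (t div nat p)" using e by (simp add: div_Suc mod_Suc)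
  ultimately show ?thesis using q unfolding cI_def cK_def cE_def st t_def[symmetric]
    by (simp add: mod_Suc)
qed

lemma idx_bounds:
  assumes n: "n > 0" and np: "n = g * p" and g: "g > 0" and p: "p > 0" and q: "q < 2 * nat n"
  shows "0 \<le> cI p q" "cI p q < g" "0 \<le> cK p q" "cK p q < p" "cE q = 0 \<or> cE q = 1"
proof -
  have "q div 2 < nat n" using q by simp
  also have "nat n = nat g * nat p" using np g p by (simp add: nat_mult_distrib)
  finally have "q div 2 div nat p < nat g" using p by (simp add: div_less_iff_less_mult)
  then show "cI p q < g" unfolding cI_def using g by linarith
  show "0 \<le> cI p q" unfolding cI_def by simp
  show "0 \<le> cK p q" unfolding cK_def by simp
  have "q div 2 mod nat p < nat p" using p by simp
  then have "int (q div 2 mod nat p) < int (nat p)" by linarith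
  then show "cK p q < p" unfolding cK_def using p by simp
  show "cE q = 0 \<or> cE q = 1" unfolding cE_def by auto
qed

lemma idx_inj:
  assumes p: "p > 0" and e: "cI p q = cI p q'" "cK p q = cK p q'" "cE q = cE q'"
  shows "q = q'"
proof -
  have "q div 2 div nat p = q' div 2 div nat p" "q div 2 mod nat p = q' div 2 mod nat p" "q mod 2 = q' mod 2"
    using e unfolding cI_def cK_def cE_def by simp_all
  then have "q div 2 = q' div 2" by (metis div_mult_mod_eq)
  then show ?thesis using \<open>q mod 2 = q' mod 2\<close> by (metis div_mult_mod_eq)
qed

definition hh1 :: "int \<Rightarrow> int \<Rightarrow> int \<Rightarrow> nat \<Rightarrow> int \<times> int" where
  "hh1 n s p q = (cE q, (- cI p q + cK p q * s) mod n)"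
definition hh2 :: "int \<Rightarrow> int \<Rightarrow> int \<Rightarrow> int \<Rightarrow> nat \<Rightarrow> int \<times> int" where
  "hh2 n s p g q = (cE q, (- g + cI p q + cK p q * s + cE q) mod n)"
definition ll1 :: "int \<Rightarrow> nat \<Rightarrow> bool" where "ll1 p q = (q mod 2 = 1 \<and> cK p q \<noteq> p - 1)"
definition ll2 :: "int \<Rightarrow> nat \<Rightarrow> bool" where "ll2 p q = (q mod 2 = 0 \<or> cK p q = p - 1)"

lemma good2:
  fixes n z :: int
  assumes n: "n > 0"
  shows "good 2 n z"
proof -
  define s where "s = z + 1"
  define g where "g = gcd s n"
  define p where "p = n div g"
  define N where "N = 2 * nat n"
  note b = nt_basic[where s=s and n=n, OF n, folded g_def, folded p_def]
  obtain w where w: "p * s = n * w" using b(4) by (rule dvdE)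
  have N: "N > 0" unfolding N_def using n by simp
  have fin: "finite (torV 2 n)" unfolding torV_def by simp
  have card: "card (torV 2 n) = N" unfolding torV_def N_def using n by (simp add: card_cartesian_product)
  have bnd: "0 \<le> cI p q" "cI p q < g" "0 \<le> cK p q" "cK p q < p" "cE q = 0 \<or> cE q = 1" if "q < N" for q
    using idx_bounds[OF n b(2) b(1) b(3), of q] that unfolding N_def by auto
  have zs: "z = s - 1" unfolding s_def by simp
  have par: "q mod 2 = 0 \<or> q mod 2 = 1" for q :: nat by auto
  have st1: "hh1 n s p (Suc q) = (if ll1 p q then tor_b 2 n z else tor_a 2 n z) (hh1 n s p q)" for q
  proof -
    consider (e) "q mod 2 = 0" | (o1) "q mod 2 = 1" "cK p q \<noteq> p - 1" | (o2) "q mod 2 = 1" "cK p q = p - 1"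
      using par by fastforce
    then show ?thesis
    proof cases
      case e
      then show ?thesis using idx_even[OF e, of p] unfolding hh1_def ll1_def tor_a_def by simp
    next
      case o1
      then show ?thesis using idx_odd1[OF b(3) o1] unfolding hh1_def ll1_def tor_b_def zs
        by (simp add: mod_simps algebra_simps)
    next
      case o2
      have "(- cI p q + (p - 1) * s + (s - 1)) mod n = (- cI p q - 1 + n * w) mod n"
        using w by (simp add: algebra_simps)
      also have "\<dots> = (- (cI p q + 1)) mod n" by simp
      finally have e: "(- cI p q + (p - 1) * s + (s - 1)) mod n = (- (cI p q + 1)) mod n" .
      show ?thesis using idx_odd2[OF b(3) o2] o2 e unfolding hh1_def ll1_def tor_a_def zs
        by (simp add: mod_simps)
    qed
  qed
  have st2: "hh2 n s p g (Suc q) = (if ll2 p q then tor_b 2 n z else tor_a 2 n z) (hh2 n s p g q)" for q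
  proof -
    consider (e) "q mod 2 = 0" | (o1) "q mod 2 = 1" "cK p q \<noteq> p - 1" | (o2) "q mod 2 = 1" "cK p q = p - 1"
      using par by fastforce
    then show ?thesis
    proof cases
      case e
      then show ?thesis using idx_even[OF e, of p] unfolding hh2_def ll2_def tor_b_def
        by (simp add: mod_simps algebra_simps)
    next
      case o1
      have e: "((- g + cI p q + cK p q * s + 1) mod n + (s - 1)) mod n = (- g + cI p q + (cK p q + 1) * s) mod n"
        by (simp only: mod_add_left_eq) (simp add: algebra_simps)
      show ?thesis using idx_odd1[OF b(3) o1] o1 e unfolding hh2_def ll2_def tor_a_def zs
        by simp
    next
      case o2
      have 1: "hh2 n s p g (Suc q) = (0, (- g + (cI p q + 1)) mod n)"
        using idx_odd2[OF b(3) o2] unfolding hh2_def by simp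
      have 2: "tor_b 2 n z (hh2 n s p g q) = (0, ((- g + cI p q + (p - 1) * s + 1) mod n + z + 1) mod n)"
        using idx_odd2[OF b(3) o2] o2 unfolding hh2_def tor_b_def by simp
      have "((- g + cI p q + (p - 1) * s + 1) mod n + z + 1) mod n = (- g + cI p q + (p - 1) * s + 1 + z + 1) mod n"
        by (simp only: add.assoc mod_add_left_eq)
      also have "\<dots> = (- g + (cI p q + 1) + n * w) mod n" using w unfolding zs by (simp add: algebra_simps)
      also have "\<dots> = (- g + (cI p q + 1)) mod n" by simp
      finally show ?thesis using 1 2 o2 unfolding ll2_def by simp
    qed
  qed
  have inj1: "inj_on (hh1 n s p) {0..<N}"
  proof (rule inj_onI)
    fix q q' assume q: "q \<in> {0..<N}" and q': "q' \<in> {0..<N}" and e: "hh1 n s p q = hh1 n s p q'"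
    have ee: "cE q = cE q'" and m: "(- cI p q + cK p q * s) mod n = (- cI p q' + cK p q' * s) mod n"
      using e unfolding hh1_def by auto
    have "n dvd (cI p q' - cI p q) + (cK p q - cK p q') * s"
      using m by (simp add: mod_eq_dvd_iff algebra_simps)
    then have "cI p q = cI p q' \<and> cK p q = cK p q'"
      using nt_inj[OF n, of "cI p q" s "cI p q'" "cK p q" "cK p q'"] bnd[of q] bnd[of q'] q q'
      unfolding g_def p_def by auto
    then show "q = q'" using idx_inj[OF b(3)] ee by blast
  qed
  have inj2: "inj_on (hh2 n s p g) {0..<N}"
  proof (rule inj_onI)
    fix q q' assume q: "q \<in> {0..<N}" and q': "q' \<in> {0..<N}" and e: "hh2 n s p g q = hh2 n s p g q'"
    have ee: "cE q = cE q'" and m: "(- g + cI p q + cK p q * s + cE q) mod n = (- g + cI p q' + cK p q' * s + cE q') mod n"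
      using e unfolding hh2_def by auto
    have "n dvd (cI p q - cI p q') + (cK p q - cK p q') * s"
      using m ee by (simp add: mod_eq_dvd_iff algebra_simps)
    then have "cI p q = cI p q' \<and> cK p q = cK p q'"
      using nt_inj[OF n, of "cI p q" s "cI p q'" "cK p q" "cK p q'"] bnd[of q] bnd[of q'] q q'
      unfolding g_def p_def by auto
    then show "q = q'" using idx_inj[OF b(3)] ee by blast
  qed
  have sub1: "hh1 n s p ` {0..<N} \<subseteq> torV 2 n"
  proof
    fix x assume "x \<in> hh1 n s p ` {0..<N}"
    then obtain q where "q < N" "x = hh1 n s p q" by auto
    then show "x \<in> torV 2 n" using bnd[of q] n unfolding hh1_def torV_def by auto
  qed
  have sub2: "hh2 n s p g ` {0..<N} \<subseteq> torV 2 n"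
  proof
    fix x assume "x \<in> hh2 n s p g ` {0..<N}"
    then obtain q where "q < N" "x = hh2 n s p g q" by auto
    then show "x \<in> torV 2 n" using bnd[of q] n unfolding hh2_def torV_def by auto
  qed
  note H1 = ham_path_fun[OF N inj1 sub1 fin card, of "ll1 p" "tor_b 2 n z" "tor_a 2 n z"]
  note H2 = ham_path_fun[OF N inj2 sub2 fin card, of "ll2 p" "tor_b 2 n z" "tor_a 2 n z"]
  have dj: "False" if q: "q < N" and q': "q' < N" and e: "hh1 n s p q = hh2 n s p g q'" and l: "ll1 p q = ll2 p q'" for q q'
  proof -
    have ee: "cE q = cE q'" and m: "(- cI p q + cK p q * s) mod n = (- g + cI p q' + cK p q' * s + cE q') mod n"
      using e unfolding hh1_def hh2_def by auto
    have "q mod 2 = q' mod 2" using ee unfolding cE_def by simp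
    moreover have "q mod 2 = 1"
    proof (rule ccontr)
      assume "q mod 2 \<noteq> 1"
      then have "q mod 2 = 0" by auto
      then show False using l \<open>q mod 2 = q' mod 2\<close> unfolding ll1_def ll2_def by auto
    qed
    ultimately have o: "q mod 2 = 1" "q' mod 2 = 1" "cE q' = 1" unfolding cE_def by auto
    have dv: "n dvd (- cI p q + cK p q * s) - (- g + cI p q' + cK p q' * s + 1)"
      using m o(3) by (simp add: mod_eq_dvd_iff)
    have lk: "(cK p q \<noteq> p - 1) = (cK p q' = p - 1)" using l o unfolding ll1_def ll2_def by simp
    have B: "0 \<le> cI p q" "cI p q < gcd s n" "0 \<le> cI p q'" "cI p q' < gcd s n"
      "0 \<le> cK p q" "cK p q < p" "0 \<le> cK p q'" "cK p q' < p"
      using bnd[OF q] bnd[OF q'] unfolding g_def by auto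
    show False
    proof (cases "cK p q' = p - 1")
      case True
      then have k: "cK p q \<noteq> p - 1" using lk by simp
      have eq: "(- cI p q + cK p q * s) - (- g + cI p q' + cK p q' * s + 1)
            = ((cK p q + 1) * s - (cI p q + cI p q' + 1 - g)) - p * s"
        unfolding True by (simp add: algebra_simps)
      from dv have "n dvd ((cK p q + 1) * s - (cI p q + cI p q' + 1 - g)) - p * s" unfolding eq .
      then have "n dvd (((cK p q + 1) * s - (cI p q + cI p q' + 1 - g)) - p * s) + p * s"
        using b(4) by (rule dvd_add)
      then have "n dvd (cK p q + 1) * s - (cI p q + cI p q' + 1 - gcd s n)"
        unfolding g_def by simp
      then show False using nt_disj[OF n, of "cI p q" s "cI p q'" "cK p q + 1"] B k unfolding p_def g_def by auto
    next
      case False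
      then have k: "cK p q = p - 1" using lk by simp
      have eq: "(- cI p q + cK p q * s) - (- g + cI p q' + cK p q' * s + 1)
            = p * s - ((cK p q' + 1) * s + (cI p q + cI p q' + 1 - g))"
        unfolding k by (simp add: algebra_simps)
      from dv have "n dvd p * s - ((cK p q' + 1) * s + (cI p q + cI p q' + 1 - g))" unfolding eq .
      then have "n dvd p * s - (p * s - ((cK p q' + 1) * s + (cI p q + cI p q' + 1 - g)))"
        using b(4) dvd_diff by blast
      then have "n dvd (cK p q' + 1) * s + (cI p q + cI p q' + 1 - gcd s n)"
        unfolding g_def by (simp add: algebra_simps)
      then show False using nt_disj[OF n, of "cI p q" s "cI p q'" "cK p q' + 1"] B False unfolding p_def g_def by auto
    qed
  qed
  have "path_arcs (map (hh1 n s p) [0..<N], map (ll1 p) [0..<N - 1]) \<inter>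
        path_arcs (map (hh2 n s p g) [0..<N], map (ll2 p) [0..<N - 1]) = {}"
    unfolding H1(2)[OF st1] H2(2)[OF st2]
  proof (rule equals0I)
    fix x assume "x \<in> {(hh1 n s p q, ll1 p q) |q. q < N - 1} \<inter> {(hh2 n s p g q, ll2 p q) |q. q < N - 1}"
    then obtain q q' where "x = (hh1 n s p q, ll1 p q)" "q < N - 1" "x = (hh2 n s p g q', ll2 p q')" "q' < N - 1"
      by blast
    then have "q < N" "q' < N" "hh1 n s p q = hh2 n s p g q'" "ll1 p q = ll2 p q'" by auto
    then show False by (rule dj)
  qed
  then show ?thesis unfolding good_def two_arc_disjoint_ham_paths_def
    using H1(1)[OF st1] H2(1)[OF st2] by blast
qed


definition u1 :: "int \<Rightarrow> int \<Rightarrow> bool \<Rightarrow> int \<times> int \<Rightarrow> int \<times> int" where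
  "u1 m n e v = (m, if e then (snd v + 1) mod n else snd v)"
definition u2 :: "int \<Rightarrow> int \<Rightarrow> int \<times> int \<Rightarrow> int \<times> int" where
  "u2 m n v = (m + 1, (snd v + 1) mod n)"
definition ex :: "int \<Rightarrow> int \<Rightarrow> bool \<Rightarrow> int \<times> int \<Rightarrow> (int \<times> int) list" where
  "ex m n e v = (if fst v = m - 1 then [v, u1 m n e v, u2 m n v] else [v])"

fun NV :: "int \<Rightarrow> int \<Rightarrow> bool \<Rightarrow> (int \<times> int) list \<Rightarrow> (int \<times> int) list" where
  "NV m n e [] = []"
| "NV m n e (v # vs) = ex m n e v @ NV m n e vs"

fun NL :: "int \<Rightarrow> int \<Rightarrow> bool \<Rightarrow> (int \<times> int) list \<Rightarrow> bool list \<Rightarrow> bool list" where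
  "NL m n e [] ls = []"
| "NL m n e [v] ls = (if fst v = m - 1 then [e, \<not> e] else [])"
| "NL m n e (v # w # vs) ls = (case ls of [] \<Rightarrow> [] | l # ls' \<Rightarrow>
      (if fst v = m - 1 then [e, \<not> e, l] else [l]) @ NL m n e (w # vs) ls')"

definition SS :: "int \<Rightarrow> int \<Rightarrow> bool \<Rightarrow> ((int \<times> int) \<times> bool) set \<Rightarrow> ((int \<times> int) \<times> bool) set" where
  "SS m n e A = {x \<in> A. fst (fst x) \<noteq> m - 1} \<union> {(v, e) | v. fst v = m - 1} \<union> {(v, \<not> e) | v. fst v = m}
     \<union> {(u2 m n v, l) | v l. (v, l) \<in> A \<and> fst v = m - 1}"

lemma SS_mem:
  "(v, l) \<in> SS m n e A \<longleftrightarrow> ((v, l) \<in> A \<and> fst v \<noteq> m - 1) \<or> (fst v = m - 1 \<and> l = e) \<or> (fst v = m \<and> l = (\<not> e))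
     \<or> (\<exists>w. (w, l) \<in> A \<and> fst w = m - 1 \<and> v = u2 m n w)"
  unfolding SS_def by (cases v) fastforce

lemma SS_mono: "A \<subseteq> B \<Longrightarrow> SS m n e A \<subseteq> SS m n e B"
  unfolding SS_def by blast

lemma walk_append:
  assumes "walk f g xs ls1" "walk f g (y # ys) ls2" "y = (if l then g else f) (last xs)"
  shows "walk f g (xs @ y # ys) (ls1 @ l # ls2)"
  using assms
proof (induction f g xs ls1 rule: walk.induct)
  case (1 f g ls)
  then show ?case by simp
next
  case (2 f g v ls)
  then show ?case by simp
next
  case (3 f g v w vs ls)
  then show ?case by (cases ls) auto
qed

lemma walk_hd: "walk f g (v # vs) ls \<Longrightarrow> True" by simp

lemma NV_hd: "NV m n e (v # vs) = v # tl (NV m n e (v # vs))"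
  by (simp add: ex_def)

lemma B_steps:
  assumes m: "m \<ge> 1" and n: "n > 0" and v: "v \<in> torV m n"
  shows "fst v \<noteq> m - 1 \<Longrightarrow> tor_a (m + 2) n (z - 1) v = tor_a m n z v"
    and "fst v \<noteq> m - 1 \<Longrightarrow> tor_b (m + 2) n (z - 1) v = tor_b m n z v"
    and "fst v = m - 1 \<Longrightarrow> u1 m n e v = (if e then tor_b (m + 2) n (z - 1) else tor_a (m + 2) n (z - 1)) v"
    and "fst v = m - 1 \<Longrightarrow> u2 m n v = (if \<not> e then tor_b (m + 2) n (z - 1) else tor_a (m + 2) n (z - 1)) (u1 m n e v)"
    and "fst v = m - 1 \<Longrightarrow> tor_a (m + 2) n (z - 1) (u2 m n v) = tor_a m n z v"
    and "fst v = m - 1 \<Longrightarrow> tor_b (m + 2) n (z - 1) (u2 m n v) = tor_b m n z v"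
proof -
  obtain i j where ij: "v = (i, j)" by (cases v)
  have r: "0 \<le> i" "i < m" "0 \<le> j" "j < n" using v ij unfolding torV_def by auto
  show "fst v \<noteq> m - 1 \<Longrightarrow> tor_a (m + 2) n (z - 1) v = tor_a m n z v"
    using r unfolding ij tor_a_def by auto
  show "fst v \<noteq> m - 1 \<Longrightarrow> tor_b (m + 2) n (z - 1) v = tor_b m n z v"
    using r unfolding ij tor_b_def by auto
  show "fst v = m - 1 \<Longrightarrow> u1 m n e v = (if e then tor_b (m + 2) n (z - 1) else tor_a (m + 2) n (z - 1)) v"
    using r unfolding ij tor_a_def tor_b_def u1_def by auto
  show "fst v = m - 1 \<Longrightarrow> u2 m n v = (if \<not> e then tor_b (m + 2) n (z - 1) else tor_a (m + 2) n (z - 1)) (u1 m n e v)"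
    using r unfolding ij tor_a_def tor_b_def u1_def u2_def by (auto simp: mod_simps)
  show "fst v = m - 1 \<Longrightarrow> tor_a (m + 2) n (z - 1) (u2 m n v) = tor_a m n z v"
    using r unfolding ij tor_a_def tor_b_def u2_def by (auto simp: mod_simps)
  show "fst v = m - 1 \<Longrightarrow> tor_b (m + 2) n (z - 1) (u2 m n v) = tor_b m n z v"
    using r unfolding ij tor_a_def tor_b_def u2_def by (auto simp: mod_simps add_ac)
qed

lemma B_path:
  assumes m: "m \<ge> 1" and n: "n > 0"
  shows "walk (tor_a m n z) (tor_b m n z) vs ls \<Longrightarrow> set vs \<subseteq> torV m n \<Longrightarrow>
     walk (tor_a (m + 2) n (z - 1)) (tor_b (m + 2) n (z - 1)) (NV m n e vs) (NL m n e vs ls)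
     \<and> set (zip (NV m n e vs) (NL m n e vs ls)) \<subseteq> SS m n e (set (zip vs ls))"
proof (induction vs arbitrary: ls rule: induct_list012)
  case 1
  then show ?case by simp
next
  case (2 v)
  then have ls: "ls = []" and v: "v \<in> torV m n" by auto
  note st = B_steps[OF m n v]
  show ?case
  proof (cases "fst v = m - 1")
    case True
    have w: "walk (tor_a (m + 2) n (z - 1)) (tor_b (m + 2) n (z - 1)) [v, u1 m n e v, u2 m n v] [e, \<not> e]"
      using st(3)[OF True] st(4)[OF True] by simp
    have z: "set (zip [v, u1 m n e v, u2 m n v] [e, \<not> e]) \<subseteq> SS m n e (set (zip [v] ls))"
      using True unfolding SS_def u1_def ls by (cases v) auto
    have e1: "NV m n e [v] = [v, u1 m n e v, u2 m n v]" using True by (simp add: ex_def)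
    have e2: "NL m n e [v] ls = [e, \<not> e]" using True by simp
    show ?thesis unfolding e1 e2 using w z by blast
  next
    case False
    then show ?thesis using ls by (simp add: ex_def)
  qed
next
  case (3 v w vs)
  obtain l ls' where ls: "ls = l # ls'" using "3.prems"(1) by (cases ls) auto
  have wv: "w = (if l then tor_b m n z else tor_a m n z) v" and wk: "walk (tor_a m n z) (tor_b m n z) (w # vs) ls'"
    using "3.prems"(1) ls by auto
  have v: "v \<in> torV m n" and sub: "set (w # vs) \<subseteq> torV m n" using "3.prems"(2) by auto
  note IH = "3.IH"(2)[OF wk sub]
  note st = B_steps[OF m n v]
  have hd: "NV m n e (w # vs) = w # tl (NV m n e (w # vs))" by (rule NV_hd)
  have W1: "walk (tor_a (m + 2) n (z - 1)) (tor_b (m + 2) n (z - 1)) (w # tl (NV m n e (w # vs))) (NL m n e (w # vs) ls')"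
    using IH hd by metis
  have mono: "SS m n e (set (zip (w # vs) ls')) \<subseteq> SS m n e (set (zip (v # w # vs) ls))"
    by (rule SS_mono) (auto simp: ls)
  show ?case
  proof (cases "fst v = m - 1")
    case True
    have e1: "NV m n e (v # w # vs) = [v, u1 m n e v, u2 m n v] @ NV m n e (w # vs)"
      using True by (simp add: ex_def)
    have e2: "NL m n e (v # w # vs) ls = [e, \<not> e] @ l # NL m n e (w # vs) ls'"
      using True ls by simp
    have w0: "walk (tor_a (m + 2) n (z - 1)) (tor_b (m + 2) n (z - 1)) [v, u1 m n e v, u2 m n v] [e, \<not> e]"
      using st(3)[OF True] st(4)[OF True] by simp
    have wl: "w = (if l then tor_b (m + 2) n (z - 1) else tor_a (m + 2) n (z - 1)) (last [v, u1 m n e v, u2 m n v])"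
      using wv st(5)[OF True] st(6)[OF True] by simp
    have "walk (tor_a (m + 2) n (z - 1)) (tor_b (m + 2) n (z - 1))
        ([v, u1 m n e v, u2 m n v] @ w # tl (NV m n e (w # vs))) ([e, \<not> e] @ l # NL m n e (w # vs) ls')"
      by (rule walk_append[OF w0 W1 wl])
    then have W: "walk (tor_a (m + 2) n (z - 1)) (tor_b (m + 2) n (z - 1)) (NV m n e (v # w # vs)) (NL m n e (v # w # vs) ls)"
      unfolding e1 e2 using hd by metis
    have "set (zip (NV m n e (v # w # vs)) (NL m n e (v # w # vs) ls))
        = {(v, e), (u1 m n e v, \<not> e), (u2 m n v, l)} \<union> set (zip (NV m n e (w # vs)) (NL m n e (w # vs) ls'))"
      unfolding e1 e2 by simp
    also have "\<dots> \<subseteq> SS m n e (set (zip (v # w # vs) ls))"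
    proof -
      have "{(v, e), (u1 m n e v, \<not> e), (u2 m n v, l)} \<subseteq> SS m n e (set (zip (v # w # vs) ls))"
        using True unfolding SS_def u1_def ls by (cases v) auto
      then show ?thesis using IH mono by blast
    qed
    finally show ?thesis using W by blast
  next
    case False
    have e1: "NV m n e (v # w # vs) = [v] @ NV m n e (w # vs)"
      using False by (simp add: ex_def)
    have e2: "NL m n e (v # w # vs) ls = [] @ l # NL m n e (w # vs) ls'"
      using False ls by simp
    have wl: "w = (if l then tor_b (m + 2) n (z - 1) else tor_a (m + 2) n (z - 1)) (last [v])"
      using wv st(1)[OF False] st(2)[OF False] by simp
    have "walk (tor_a (m + 2) n (z - 1)) (tor_b (m + 2) n (z - 1))
        ([v] @ w # tl (NV m n e (w # vs))) ([] @ l # NL m n e (w # vs) ls')"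
      by (rule walk_append[OF _ W1 wl]) simp
    then have W: "walk (tor_a (m + 2) n (z - 1)) (tor_b (m + 2) n (z - 1)) (NV m n e (v # w # vs)) (NL m n e (v # w # vs) ls)"
      unfolding e1 e2 using hd by metis
    have "set (zip (NV m n e (v # w # vs)) (NL m n e (v # w # vs) ls))
        = {(v, l)} \<union> set (zip (NV m n e (w # vs)) (NL m n e (w # vs) ls'))"
      unfolding e1 e2 by simp
    also have "\<dots> \<subseteq> SS m n e (set (zip (v # w # vs) ls))"
    proof -
      have "{(v, l)} \<subseteq> SS m n e (set (zip (v # w # vs) ls))"
        using False unfolding SS_def ls by auto
      then show ?thesis using IH mono by blast
    qed
    finally show ?thesis using W by blast
  qed
qed

lemma B_set:
  "set (NV m n e vs) = set vs \<union> u1 m n e ` (set vs \<inter> {v. fst v = m - 1}) \<union> u2 m n ` (set vs \<inter> {v. fst v = m - 1})"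
  by (induction vs) (auto simp: ex_def)

lemma snd_inj:
  fixes x y n :: int
  assumes "0 \<le> x" "x < n" "0 \<le> y" "y < n" "(x + 1) mod n = (y + 1) mod n"
  shows "x = y"
proof -
  have "n dvd (x + 1) - (y + 1)" using assms(5) by (simp add: mod_eq_dvd_iff)
  then have "n dvd x - y" by simp
  then show ?thesis using small_dvd_zero[of n "x - y"] assms by auto
qed

lemma u1_inj:
  assumes "v \<in> torV m n" "v' \<in> torV m n" "fst v = m - 1" "fst v' = m - 1" "u1 m n e v = u1 m n e v'"
  shows "v = v'"
  using assms snd_inj[of "snd v" n "snd v'"] unfolding u1_def torV_def
  by (cases v; cases v') (auto split: if_splits)

lemma u2_inj:
  assumes "v \<in> torV m n" "v' \<in> torV m n" "fst v = m - 1" "fst v' = m - 1" "u2 m n v = u2 m n v'"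
  shows "v = v'"
  using assms snd_inj[of "snd v" n "snd v'"] unfolding u2_def torV_def
  by (cases v; cases v') auto

lemma B_distinct:
  "distinct vs \<Longrightarrow> set vs \<subseteq> torV m n \<Longrightarrow> distinct (NV m n e vs)"
proof (induction vs)
  case Nil
  then show ?case by simp
next
  case (Cons v vs)
  have v: "v \<in> torV m n" and sub: "set vs \<subseteq> torV m n" and nv: "v \<notin> set vs" and d: "distinct vs"
    using Cons.prems by auto
  have fv: "fst v < m" using v unfolding torV_def by (cases v) auto
  have fl: "\<And>x. x \<in> set vs \<Longrightarrow> fst x < m" using sub unfolding torV_def by auto
  have dis: "set (ex m n e v) \<inter> set (NV m n e vs) = {}"
  proof (rule equals0I)
    fix x assume x: "x \<in> set (ex m n e v) \<inter> set (NV m n e vs)"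
    then have x1: "x \<in> set vs \<union> u1 m n e ` (set vs \<inter> {v. fst v = m - 1}) \<union> u2 m n ` (set vs \<inter> {v. fst v = m - 1})"
      using B_set by blast
    have x2: "x = v \<or> (fst v = m - 1 \<and> (x = u1 m n e v \<or> x = u2 m n v))"
      using x unfolding ex_def by (auto split: if_splits)
    show False
    proof (cases "x = v")
      case True
      then show False using x1 nv fv unfolding u1_def u2_def by auto
    next
      case False
      then have L: "fst v = m - 1" and xx: "x = u1 m n e v \<or> x = u2 m n v" using x2 by auto
      show False using xx
      proof
        assume xu: "x = u1 m n e v"
        have "x \<notin> set vs" using xu fl unfolding u1_def by fastforce
        moreover have "x \<notin> u2 m n ` (set vs \<inter> {v. fst v = m - 1})" using xu unfolding u1_def u2_def by auto
        moreover have "x \<notin> u1 m n e ` (set vs \<inter> {v. fst v = m - 1})"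
        proof
          assume "x \<in> u1 m n e ` (set vs \<inter> {v. fst v = m - 1})"
          then obtain v' where "v' \<in> set vs" "fst v' = m - 1" "u1 m n e v' = u1 m n e v" using xu by auto
          then have "v' = v" using u1_inj[OF _ v _ L] sub by blast
          then show False using nv \<open>v' \<in> set vs\<close> by simp
        qed
        ultimately show False using x1 by blast
      next
        assume xu: "x = u2 m n v"
        have "x \<notin> set vs" using xu fl unfolding u2_def by fastforce
        moreover have "x \<notin> u1 m n e ` (set vs \<inter> {v. fst v = m - 1})" using xu unfolding u1_def u2_def by auto
        moreover have "x \<notin> u2 m n ` (set vs \<inter> {v. fst v = m - 1})"
        proof
          assume "x \<in> u2 m n ` (set vs \<inter> {v. fst v = m - 1})"
          then obtain v' where "v' \<in> set vs" "fst v' = m - 1" "u2 m n v' = u2 m n v" using xu by auto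
          then have "v' = v" using u2_inj[OF _ v _ L] sub by blast
          then show False using nv \<open>v' \<in> set vs\<close> by simp
        qed
        ultimately show False using x1 by blast
      qed
    qed
  qed
  have "distinct (ex m n e v)" using fv unfolding ex_def u1_def u2_def by (cases v) auto
  then show ?case using Cons.IH[OF d sub] dis by simp
qed

lemma B_full_set:
  assumes m: "m \<ge> 1" and n: "n > 0" and s: "set vs = torV m n"
  shows "set (NV m n e vs) = torV (m + 2) n"
proof -
  have "torV m n \<union> u1 m n e ` (torV m n \<inter> {v. fst v = m - 1}) \<union> u2 m n ` (torV m n \<inter> {v. fst v = m - 1}) = torV (m + 2) n"
  proof (intro subset_antisym subsetI)
    fix x assume "x \<in> torV m n \<union> u1 m n e ` (torV m n \<inter> {v. fst v = m - 1}) \<union> u2 m n ` (torV m n \<inter> {v. fst v = m - 1})"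
    then show "x \<in> torV (m + 2) n" using n unfolding torV_def u1_def u2_def by auto
  next
    fix x assume x: "x \<in> torV (m + 2) n"
    obtain i j where ij: "x = (i, j)" by (cases x)
    have r: "0 \<le> i" "i < m + 2" "0 \<le> j" "j < n" using x ij unfolding torV_def by auto
    have jj: "((j - 1) mod n + 1) mod n = j" using r by (simp add: mod_simps)
    have vin: "(m - 1, (j - 1) mod n) \<in> torV m n \<inter> {v. fst v = m - 1}" "(m - 1, j) \<in> torV m n \<inter> {v. fst v = m - 1}"
      using m n r unfolding torV_def by auto
    consider "i < m" | "i = m" | "i = m + 1" using r by linarith
    then show "x \<in> torV m n \<union> u1 m n e ` (torV m n \<inter> {v. fst v = m - 1}) \<union> u2 m n ` (torV m n \<inter> {v. fst v = m - 1})"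
    proof cases
      case 1
      then show ?thesis using r ij unfolding torV_def by auto
    next
      case 2
      have "x = u1 m n e (if e then (m - 1, (j - 1) mod n) else (m - 1, j))"
        using ij 2 jj unfolding u1_def by auto
      moreover have "(if e then (m - 1, (j - 1) mod n) else (m - 1, j)) \<in> torV m n \<inter> {v. fst v = m - 1}"
        using vin by auto
      ultimately show ?thesis by blast
    next
      case 3
      have "x = u2 m n (m - 1, (j - 1) mod n)" using ij 3 jj unfolding u2_def by auto
      then show ?thesis using vin by blast
    qed
  qed
  then show ?thesis unfolding B_set s .
qed

lemma goodB:
  assumes m: "m \<ge> 1" and n: "n > 0" and g: "good m n z"
  shows "good (m + 2) n (z - 1)"
proof -
  obtain vs ls vs' ls' where h1: "ham_path (torV m n) (tor_a m n z) (tor_b m n z) (vs, ls)"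
    and h2: "ham_path (torV m n) (tor_a m n z) (tor_b m n z) (vs', ls')"
    and dj: "set (zip vs ls) \<inter> set (zip vs' ls') = {}"
    using g unfolding good_def two_iff by blast
  have p1: "distinct vs" "set vs = torV m n" "walk (tor_a m n z) (tor_b m n z) vs ls"
    using h1 unfolding ham_path_walk by auto
  have p2: "distinct vs'" "set vs' = torV m n" "walk (tor_a m n z) (tor_b m n z) vs' ls'"
    using h2 unfolding ham_path_walk by auto
  have sub1: "set vs \<subseteq> torV m n" and sub2: "set vs' \<subseteq> torV m n" using p1(2) p2(2) by auto
  have B1: "walk (tor_a (m + 2) n (z - 1)) (tor_b (m + 2) n (z - 1)) (NV m n False vs) (NL m n False vs ls)"
    "set (zip (NV m n False vs) (NL m n False vs ls)) \<subseteq> SS m n False (set (zip vs ls))"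
    using B_path[where e=False, OF m n p1(3) sub1] by auto
  have B2: "walk (tor_a (m + 2) n (z - 1)) (tor_b (m + 2) n (z - 1)) (NV m n True vs') (NL m n True vs' ls')"
    "set (zip (NV m n True vs') (NL m n True vs' ls')) \<subseteq> SS m n True (set (zip vs' ls'))"
    using B_path[where e=True, OF m n p2(3) sub2] by auto
  have H1: "ham_path (torV (m + 2) n) (tor_a (m + 2) n (z - 1)) (tor_b (m + 2) n (z - 1)) (NV m n False vs, NL m n False vs ls)"
    unfolding ham_path_walk using B1(1) B_distinct[OF p1(1) sub1] B_full_set[OF m n p1(2)] by blast
  have H2: "ham_path (torV (m + 2) n) (tor_a (m + 2) n (z - 1)) (tor_b (m + 2) n (z - 1)) (NV m n True vs', NL m n True vs' ls')"
    unfolding ham_path_walk using B2(1) B_distinct[OF p2(1) sub2] B_full_set[OF m n p2(2)] by blast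
  define A1 where "A1 = set (zip vs ls)"
  define A2 where "A2 = set (zip vs' ls')"
  have A1V: "fst x \<in> torV m n" if "x \<in> A1" for x
  proof -
    obtain a b where ab: "x = (a, b)" by (cases x)
    have "a \<in> set vs" using that unfolding A1_def ab by (rule set_zip_leftD)
    then show ?thesis using p1(2) ab by simp
  qed
  have A2V: "fst x \<in> torV m n" if "x \<in> A2" for x
  proof -
    obtain a b where ab: "x = (a, b)" by (cases x)
    have "a \<in> set vs'" using that unfolding A2_def ab by (rule set_zip_leftD)
    then show ?thesis using p2(2) ab by simp
  qed
  have lt: "fst v < m" if "v \<in> torV m n" for v using that unfolding torV_def by (simp add: mem_Times_iff)
  have SSd: "SS m n False A1 \<inter> SS m n True A2 = {}"
  proof (rule equals0I)
    fix x assume x: "x \<in> SS m n False A1 \<inter> SS m n True A2"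
    obtain v l where vl: "x = (v, l)" by (cases x)
    have x1: "(v, l) \<in> SS m n False A1" "(v, l) \<in> SS m n True A2" using x vl by auto
    have c1: "(x \<in> A1 \<and> fst v \<noteq> m - 1) \<or> (fst v = m - 1 \<and> l = False) \<or> (fst v = m \<and> l = True)
        \<or> (\<exists>w. (w, l) \<in> A1 \<and> fst w = m - 1 \<and> v = u2 m n w)"
      using x1(1) unfolding SS_mem vl by simp
    have c2: "(x \<in> A2 \<and> fst v \<noteq> m - 1) \<or> (fst v = m - 1 \<and> l = True) \<or> (fst v = m \<and> l = False)
        \<or> (\<exists>w. (w, l) \<in> A2 \<and> fst w = m - 1 \<and> v = u2 m n w)"
      using x1(2) unfolding SS_mem vl by simp
    have u2f: "\<And>w. fst (u2 m n w) = m + 1" unfolding u2_def by simp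
    have in1: "x \<in> A1 \<Longrightarrow> fst v < m" using A1V lt vl by fastforce
    have in2: "x \<in> A2 \<Longrightarrow> fst v < m" using A2V lt vl by fastforce
    show False
    proof (cases "x \<in> A1 \<and> fst v \<noteq> m - 1")
      case True
      then show False using c2 in1 u2f dj unfolding A1_def A2_def by auto
    next
      case F1: False
      show False
      proof (cases "\<exists>w. (w, l) \<in> A1 \<and> fst w = m - 1 \<and> v = u2 m n w")
        case True
        then obtain w where w: "(w, l) \<in> A1" "fst w = m - 1" "v = u2 m n w" by blast
        from c2 show False
        proof (elim disjE)
          assume "x \<in> A2 \<and> fst v \<noteq> m - 1" then show False using in2 w(3) u2f by auto
        next
          assume "fst v = m - 1 \<and> l = True" then show False using w(3) u2f by auto
        next
          assume "fst v = m \<and> l = False" then show False using w(3) u2f by auto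
        next
          assume "\<exists>w. (w, l) \<in> A2 \<and> fst w = m - 1 \<and> v = u2 m n w"
          then obtain w' where w': "(w', l) \<in> A2" "fst w' = m - 1" "v = u2 m n w'" by blast
          have "w = w'" using u2_inj[of w m n w'] A1V[OF w(1)] A2V[OF w'(1)] w w' by auto
          then show False using w(1) w'(1) dj unfolding A1_def A2_def by auto
        qed
      next
        case False
        then have cc: "(fst v = m - 1 \<and> l = False) \<or> (fst v = m \<and> l = True)" using c1 F1 by blast
        from c2 show False
        proof (elim disjE)
          assume "x \<in> A2 \<and> fst v \<noteq> m - 1" then show False using in2 cc by auto
        next
          assume "fst v = m - 1 \<and> l = True" then show False using cc by auto
        next
          assume "fst v = m \<and> l = False" then show False using cc by auto
        next
          assume "\<exists>w. (w, l) \<in> A2 \<and> fst w = m - 1 \<and> v = u2 m n w"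
          then obtain w' where "v = u2 m n w'" by blast
          then have "fst v = m + 1" using u2f by simp
          then show False using cc by auto
        qed
      qed
    qed
  qed
  have "set (zip (NV m n False vs) (NL m n False vs ls)) \<inter> set (zip (NV m n True vs') (NL m n True vs' ls')) = {}"
    using B1(2) B2(2) SSd unfolding A1_def A2_def by blast
  then show ?thesis unfolding good_def two_iff using H1 H2 by blast
qed


primrec nmul :: "nat \<Rightarrow> 'g::ab_group_add \<Rightarrow> 'g" where
  "nmul 0 x = 0"
| "nmul (Suc k) x = x + nmul k x"

lemma nmul_add: "nmul (i + j) x = nmul i x + nmul j x"
  by (induction i) (simp_all add: add.assoc)

lemma nmul_zero: "nmul k (0::'g::ab_group_add) = 0"
  by (induction k) simp_all

lemma nmul_mult: "nmul (i * j) x = nmul i (nmul j x)"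
  by (induction i) (simp_all add: nmul_add)

lemma nmul_one: "nmul 1 x = x" by simp

lemma nmul_order:
  fixes x :: "'g::{ab_group_add, finite}"
  shows "\<exists>k>0. nmul k x = 0"
proof -
  define c where "c = card (UNIV :: 'g set)"
  have "\<not> inj_on (\<lambda>k. nmul k x) {0..c}"
  proof
    assume "inj_on (\<lambda>k. nmul k x) {0..c}"
    then have "card {0..c} \<le> card (UNIV :: 'g set)"
      by (rule card_inj_on_le) auto
    then show False unfolding c_def by simp
  qed
  then obtain i j where ij: "i \<noteq> j" "nmul i x = nmul j x" unfolding inj_on_def by blast
  have "\<exists>k>0. nmul k x = 0" if "i < j" "nmul i x = nmul j x" for i j
  proof -
    have "nmul j x = nmul (j - i) x + nmul i x" using that nmul_add[of "j - i" i x] by simp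
    then have "nmul (j - i) x = 0" using that by simp
    moreover have "j - i > 0" using that by simp
    ultimately show ?thesis by blast
  qed
  then show ?thesis using ij by (metis linorder_neqE_nat)
qed

lemma nmul_mod:
  assumes "nmul k x = 0"
  shows "nmul j x = nmul (j mod k) x"
proof -
  have "nmul j x = nmul (j div k * k + j mod k) x" by simp
  also have "\<dots> = nmul (j mod k) x" by (simp only: nmul_add nmul_mult assms nmul_zero add_0)
  finally show ?thesis .
qed

lemma nmul_neg:
  assumes "nmul k x = 0" "k > 0"
  shows "- nmul i x = nmul ((k - 1) * i) x"
proof -
  have "nmul ((k - 1) * i) x + nmul i x = nmul (k * i) x"
    using assms(2) by (simp add: nmul_add[symmetric] algebra_simps)
  also have "\<dots> = nmul i (nmul k x)" by (simp add: nmul_mult mult.commute)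
  also have "\<dots> = 0" using assms(1) nmul_zero by simp
  finally show ?thesis by (simp add: add_eq_0_iff)
qed

lemma G_model:
  fixes a b :: "'g::{ab_group_add, finite}"
  assumes gen: "gen_subgroup {a, b} = UNIV"
  shows "\<exists>m n z \<phi>. m \<ge> 1 \<and> n > 0 \<and> bij_betw \<phi> (torV m n) (UNIV :: 'g set) \<and>
           (\<forall>v\<in>torV m n. \<phi> (tor_a m n z v) = \<phi> v + a \<and> \<phi> (tor_b m n z v) = \<phi> v + b)"
proof -
  define d where "d = b - a"
  have bad: "b = a + d" unfolding d_def by simp
  obtain kd where kd: "kd > 0" "nmul kd d = 0" using nmul_order by blast
  obtain ka where ka: "ka > 0" "nmul ka a = 0" using nmul_order by blast
  define N where "N = (LEAST k. 0 < k \<and> nmul k d = 0)"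
  have N: "0 < N" "nmul N d = 0"
    using LeastI[of "\<lambda>k. 0 < k \<and> nmul k d = 0" kd] kd unfolding N_def by auto
  have Nmin: "nmul k d \<noteq> 0" if "0 < k" "k < N" for k
    using not_less_Least[of k "\<lambda>k. 0 < k \<and> nmul k d = 0"] that unfolding N_def by auto
  define M where "M = (LEAST k. 0 < k \<and> (\<exists>t. nmul k a = nmul t d))"
  have "0 < ka \<and> (\<exists>t. nmul ka a = nmul t d)" using ka by (metis nmul.simps(1))
  then have M: "0 < M \<and> (\<exists>t. nmul M a = nmul t d)"
    unfolding M_def by (rule LeastI)
  then obtain t where t: "nmul M a = nmul t d" by blast
  have Mmin: False if "0 < k" "k < M" "nmul k a = nmul t' d" for k t'
    using not_less_Least[of k "\<lambda>k. 0 < k \<and> (\<exists>t. nmul k a = nmul t d)"] that unfolding M_def by auto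
  define Z where "Z = t mod N"
  have Z: "nmul Z d = nmul M a" using nmul_mod[OF N(2), of t] t unfolding Z_def by simp
  define \<phi> where "\<phi> = (\<lambda>p::int \<times> int. nmul (nat (fst p)) a + nmul (nat (snd p)) d)"
  have md: "nmul (nat (x mod int N)) d = nmul (nat x) d" if "0 \<le> x" for x
  proof -
    have "nat (x mod int N) = nat x mod N" using that N(1) by (simp add: nat_mod_distrib)
    then show ?thesis using nmul_mod[OF N(2), of "nat x"] by simp
  qed
  have Ma: "nmul M a = a + nmul (M - 1) a" using M by (metis Suc_diff_1 nmul.simps(2))
  have comm: "\<phi> (tor_a (int M) (int N) (int Z) v) = \<phi> v + a \<and> \<phi> (tor_b (int M) (int N) (int Z) v) = \<phi> v + b"
    if v: "v \<in> torV (int M) (int N)" for v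
  proof -
    obtain i j where ij: "v = (i, j)" by (cases v)
    have r: "0 \<le> i" "i < int M" "0 \<le> j" "j < int N" using v ij unfolding torV_def by auto
    show ?thesis
    proof (cases "i + 1 < int M")
      case True
      have ni: "nat (i + 1) = Suc (nat i)" using r by simp
      have nj: "nat (j + 1) = Suc (nat j)" using r by simp
      have "\<phi> (tor_a (int M) (int N) (int Z) v) = nmul (Suc (nat i)) a + nmul (nat j) d"
        using True ni unfolding ij tor_a_def \<phi>_def by simp
      moreover have "\<phi> (tor_b (int M) (int N) (int Z) v) = nmul (Suc (nat i)) a + nmul (Suc (nat j)) d"
        using True ni nj md[of "j + 1"] r unfolding ij tor_b_def \<phi>_def by simp
      ultimately show ?thesis unfolding \<phi>_def ij bad by (simp add: add_ac)
    next
      case False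
      then have im: "nat i = M - 1" using r by linarith
      have n1: "nat (j + int Z) = nat j + Z" using r by simp
      have n2: "nat (j + int Z + 1) = Suc (nat j + Z)" using r by simp
      have "\<phi> (tor_a (int M) (int N) (int Z) v) = nmul (nat j + Z) d"
        using False md[of "j + int Z"] r n1 unfolding ij tor_a_def \<phi>_def by simp
      also have "\<dots> = nmul (nat j) d + nmul M a" by (simp add: nmul_add Z)
      finally have A: "\<phi> (tor_a (int M) (int N) (int Z) v) = nmul (nat j) d + nmul M a" .
      have "\<phi> (tor_b (int M) (int N) (int Z) v) = nmul (Suc (nat j + Z)) d"
        using False md[of "j + int Z + 1"] r n2 unfolding ij tor_b_def \<phi>_def by simp
      also have "\<dots> = d + nmul (nat j) d + nmul M a" by (simp add: nmul_add Z add.assoc)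
      finally have B: "\<phi> (tor_b (int M) (int N) (int Z) v) = d + nmul (nat j) d + nmul M a" .
      show ?thesis using A B unfolding \<phi>_def ij bad Ma by (simp add: add_ac im)
    qed
  qed
  have rep: "\<exists>i j. g = nmul i a + nmul j d" if "g \<in> gen_subgroup {a, b}" for g
    using that
  proof (induction rule: gen_subgroup.induct)
    case zero
    have "(0::'g) = nmul 0 a + nmul 0 d" by simp
    then show ?case by blast
  next
    case (gen s)
    then show ?case
    proof
      assume "s = a" then have "s = nmul 1 a + nmul 0 d" by simp
      then show ?thesis by blast
    next
      assume "s \<in> {b}" then have "s = nmul 1 a + nmul 1 d" by (simp add: bad)
      then show ?thesis by blast
    qed
  next
    case (add x y)
    then obtain i j i' j' where "x = nmul i a + nmul j d" "y = nmul i' a + nmul j' d" by blast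
    then have "x + y = nmul (i + i') a + nmul (j + j') d" by (simp add: nmul_add add_ac)
    then show ?case by blast
  next
    case (neg x)
    then obtain i j where "x = nmul i a + nmul j d" by blast
    then have "- x = nmul ((ka - 1) * i) a + nmul ((kd - 1) * j) d"
      using nmul_neg[OF ka(2) ka(1), of i] nmul_neg[OF kd(2) kd(1), of j] by (simp add: add_ac)
    then show ?case by blast
  qed
  have surj: "\<exists>v\<in>torV (int M) (int N). \<phi> v = g" for g
  proof -
    obtain i j where g: "g = nmul i a + nmul j d" using rep[of g] gen by auto
    define q where "q = i div M"
    define r where "r = i mod M"
    have "nmul i a = nmul (q * M + r) a" unfolding q_def r_def by simp
    also have "\<dots> = nmul (q * t) d + nmul r a" by (simp add: nmul_add nmul_mult t)
    finally have "g = nmul r a + nmul (q * t + j) d" using g by (simp add: nmul_add add_ac)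
    also have "\<dots> = nmul r a + nmul ((q * t + j) mod N) d" using nmul_mod[OF N(2)] by simp
    finally have ge: "g = \<phi> (int r, int ((q * t + j) mod N))" unfolding \<phi>_def by simp
    have "(int r, int ((q * t + j) mod N)) \<in> torV (int M) (int N)"
      unfolding torV_def r_def using M N by auto
    then show ?thesis using ge by blast
  qed
  have key2: "J = J'" if "J \<le> J'" "J' < N" "nmul J d = nmul J' d" for J J'
  proof (rule ccontr)
    assume "J \<noteq> J'"
    have "nmul J' d = nmul (J' - J) d + nmul J d" using that nmul_add[of "J' - J" J d] by simp
    then have "nmul (J' - J) d = 0" using that by simp
    then show False using Nmin[of "J' - J"] that \<open>J \<noteq> J'\<close> by auto
  qed
  have key1: "I = I'" if "I \<le> I'" "I' < M" "nmul I a + nmul J d = nmul I' a + nmul J' d" for I I' J J'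
  proof (rule ccontr)
    assume "I \<noteq> I'"
    have "nmul I' a = nmul (I' - I) a + nmul I a" using that nmul_add[of "I' - I" I a] by simp
    then have "nmul J d = nmul (I' - I) a + nmul J' d" using that(3) by (simp add: add_ac)
    then have "nmul (I' - I) a = nmul J d - nmul J' d" by (simp add: algebra_simps)
    also have "\<dots> = nmul J d + nmul ((kd - 1) * J') d" using nmul_neg[OF kd(2) kd(1), of J'] by simp
    also have "\<dots> = nmul (J + (kd - 1) * J') d" by (simp add: nmul_add)
    finally have "nmul (I' - I) a = nmul (J + (kd - 1) * J') d" .
    moreover have "0 < I' - I" "I' - I < M" using that \<open>I \<noteq> I'\<close> by auto
    ultimately show False using Mmin by blast
  qed
  have inj: "inj_on \<phi> (torV (int M) (int N))"
  proof (rule inj_onI)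
    fix v w assume v: "v \<in> torV (int M) (int N)" and w: "w \<in> torV (int M) (int N)" and e: "\<phi> v = \<phi> w"
    obtain i j where ij: "v = (i, j)" by (cases v)
    obtain i' j' where ij': "w = (i', j')" by (cases w)
    have r: "0 \<le> i" "i < int M" "0 \<le> j" "j < int N" "0 \<le> i'" "i' < int M" "0 \<le> j'" "j' < int N"
      using v w ij ij' unfolding torV_def by auto
    have e2: "nmul (nat i) a + nmul (nat j) d = nmul (nat i') a + nmul (nat j') d"
      using e unfolding \<phi>_def ij ij' by simp
    have "nat i = nat i'"
    proof (cases "nat i \<le> nat i'")
      case True
      then show ?thesis using key1[OF True _ e2] r by linarith
    next
      case False
      then show ?thesis using key1[of "nat i'" "nat i", OF _ _ e2[symmetric]] r by linarith
    qed
    then have e3: "nmul (nat j) d = nmul (nat j') d" using e2 by simp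
    have "nat j = nat j'"
    proof (cases "nat j \<le> nat j'")
      case True
      then show ?thesis using key2[OF True _ e3] r by linarith
    next
      case False
      then show ?thesis using key2[of "nat j'" "nat j", OF _ _ e3[symmetric]] r by linarith
    qed
    then have "j = j'" using r by (metis nat_eq_iff2)
    moreover have "i = i'" using \<open>nat i = nat i'\<close> r by (metis nat_eq_iff2)
    ultimately show "v = w" using ij ij' by simp
  qed
  have bij: "bij_betw \<phi> (torV (int M) (int N)) (UNIV :: 'g set)"
    unfolding bij_betw_def
  proof
    show "inj_on \<phi> (torV (int M) (int N))" by (rule inj)
    show "\<phi> ` torV (int M) (int N) = UNIV"
    proof (intro set_eqI iffI)
      fix g :: 'g assume "g \<in> UNIV"
      obtain v where "v \<in> torV (int M) (int N)" "\<phi> v = g" using surj[of g] by blast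
      then show "g \<in> \<phi> ` torV (int M) (int N)" by blast
    qed simp
  qed
  show ?thesis
    by (rule exI[of _ "int M"], rule exI[of _ "int N"], rule exI[of _ "int Z"], rule exI[of _ \<phi>])
       (use M N bij comm in auto)
qed


lemma good_cong:
  assumes "z mod n = z' mod n" "good m n z"
  shows "good m n z'"
proof -
  have "tor_a m n z = tor_a m n z'"
    unfolding tor_a_def by (rule ext) (metis assms(1) mod_add_right_eq)
  moreover have "tor_b m n z = tor_b m n z'"
  proof (rule ext)
    fix p :: "int \<times> int"
    have "(snd p + z + 1) mod n = (snd p + 1 + z) mod n" by (simp add: add_ac)
    also have "\<dots> = (snd p + 1 + z') mod n" by (metis assms(1) mod_add_right_eq)
    also have "\<dots> = (snd p + z' + 1) mod n" by (simp add: add_ac)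
    finally show "tor_b m n z p = tor_b m n z' p" unfolding tor_b_def by simp
  qed
  ultimately show ?thesis using assms(2) unfolding good_def by simp
qed

lemma odd_lift:
  assumes n: "n > 0"
  shows "good 1 n (z + int al) \<Longrightarrow> good (1 + 2 * int al) n z"
proof (induction al arbitrary: z)
  case 0
  then show ?case by simp
next
  case (Suc al)
  have "good 1 n ((z + 1) + int al)" using Suc.prems by (simp add: add_ac)
  then have "good (1 + 2 * int al) n (z + 1)" by (rule Suc.IH)
  moreover have "1 \<le> 1 + 2 * int al" by simp
  ultimately have "good (1 + 2 * int al + 2) n (z + 1 - 1)" using goodB[OF _ n] by blast
  then show ?case by (simp add: algebra_simps)
qed

lemma even_lift:
  assumes n: "n > 0"
  shows "good (2 + 2 * int be) n z"
proof (induction be arbitrary: z)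
  case 0
  then show ?case using good2[OF n] by simp
next
  case (Suc be)
  have "good (2 + 2 * int be + 2) n (z + 1 - 1)" by (rule goodB[OF _ n Suc.IH]) simp
  then show ?case by (simp add: algebra_simps)
qed

lemma all_good:
  fixes m n z :: int
  assumes m: "m \<ge> 1" and n: "n > 0"
    and H1: "\<forall>k a :: int. k > 0 \<and> a > 0 \<and> \<not> k dvd a \<and> \<not> k dvd (a + 1) \<longrightarrow> cay_Zk k a (a + 1)"
    and H2: "\<forall>k a :: int. k > 0 \<and> a > 0 \<and> (2 * a + 1) dvd k \<and> \<not> k dvd a \<and> \<not> k dvd (a + 1)
               \<longrightarrow> cay_Zk k (- a) (a + 1)"
    and nd: "\<not> (m = 1 \<and> (z mod n = 0 \<or> (z + 1) mod n = 0))"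
  shows "good m n z"
proof -
  define k where "k = nat (m - 1)"
  have mk: "m = 1 + int k" unfolding k_def using m by simp
  show ?thesis
  proof (cases "even k")
    case False
    then obtain be where "k = 2 * be + 1" using oddE by blast
    then have "m = 2 + 2 * int be" using mk by simp
    then show ?thesis using even_lift[OF n] by simp
  next
    case True
    then obtain al where kal: "k = 2 * al" by blast
    have mal: "m = 1 + 2 * int al" using mk kal by simp
    define w where "w = z + int al"
    show ?thesis
    proof (cases "w mod n \<noteq> 0 \<and> (w + 1) mod n \<noteq> 0")
      case True
      define t where "t = w mod n"
      have "0 \<le> t" "t < n" using n unfolding t_def by simp_all
      then have t: "0 < t" "t < n" using True unfolding t_def by auto
      have t1: "t + 1 \<noteq> n"
      proof
        assume "t + 1 = n"
        have "(w + 1) mod n = (t + 1) mod n" unfolding t_def by (simp add: mod_simps)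
        then show False using True \<open>t + 1 = n\<close> by simp
      qed
      have "\<not> n dvd t" using t zdvd_not_zless by blast
      moreover have "\<not> n dvd (t + 1)"
      proof -
        have "0 < t + 1" "t + 1 < n" using t t1 by auto
        then show ?thesis using zdvd_not_zless by blast
      qed
      ultimately have c: "cay_Zk n t (t + 1)" using H1 n t by blast
      have "good 1 n w" by (rule good1[OF n c]) (simp add: t_def)
      then show ?thesis unfolding mal w_def by (rule odd_lift[OF n])
    next
      case False
      have al: "al \<ge> 1"
      proof (rule ccontr)
        assume "\<not> al \<ge> 1"
        then have "al = 0" by simp
        then show False using nd False mal unfolding w_def by simp
      qed
      define kk where "kk = (2 * int al + 1) * n"
      have "(2 * int al + 1) * 1 \<le> (2 * int al + 1) * n" using n by (intro mult_left_mono) auto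
      then have kA: "2 * int al + 1 \<le> kk" unfolding kk_def by simp
      have kk: "kk > 0" "int al < kk" "int al + 1 < kk" using kA al by auto
      have "\<not> kk dvd int al" using kk al zdvd_not_zless[of "int al" kk] by auto
      moreover have "\<not> kk dvd (int al + 1)" using kk zdvd_not_zless[of "int al + 1" kk] by auto
      moreover have "(2 * int al + 1) dvd kk" unfolding kk_def by simp
      ultimately have c: "cay_Zk kk (- int al) (int al + 1)" using H2 kk al by auto
      have g0: "good (2 * int al + 1) n (- int al)"
        by (rule good_H2) (use al n c kk_def in auto)
      show ?thesis
      proof (cases "w mod n = 0")
        case True
        have zc: "(- int al) mod n = z mod n"
        proof -
          have "n dvd z + int al" using True unfolding w_def by (simp add: mod_eq_0_iff_dvd)
          then have "n dvd - (z + int al)" by (simp only: dvd_minus_iff)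
          moreover have "- (z + int al) = (- int al) - z" by simp
          ultimately have "n dvd (- int al) - z" by metis
          then show ?thesis by (simp only: mod_eq_dvd_iff)
        qed
        have "good m n (- int al)" using g0 mal by (simp add: add.commute)
        then show ?thesis by (rule good_cong[OF zc])
      next
        case F2: False
        then have "(w + 1) mod n = 0" using False by simp
        have g1: "good (2 * int al + 1) n (- (- int al) - (2 * int al + 1))" by (rule good_sym[OF n g0])
        have zc: "(- (- int al) - (2 * int al + 1)) mod n = z mod n"
        proof -
          have "n dvd z + int al + 1" using \<open>(w + 1) mod n = 0\<close> unfolding w_def by (simp add: mod_eq_0_iff_dvd)
          then have "n dvd - (z + int al + 1)" by (simp only: dvd_minus_iff)
          moreover have "- (z + int al + 1) = (- (- int al) - (2 * int al + 1)) - z" by simp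
          ultimately have "n dvd (- (- int al) - (2 * int al + 1)) - z" by metis
          then show ?thesis by (simp only: mod_eq_dvd_iff)
        qed
        have "good m n (- (- int al) - (2 * int al + 1))" using g1 mal by (simp add: add.commute)
        then show ?thesis by (rule good_cong[OF zc])
      qed
    qed
  qed
qed

theorem mainTheorem11:
  fixes a b :: "'g::{ab_group_add, finite}"
  assumes H1: "\<forall>k a :: int. k > 0 \<and> a > 0 \<and> \<not> k dvd a \<and> \<not> k dvd (a + 1) \<longrightarrow> cay_Zk k a (a + 1)"
    and H2: "\<forall>k a :: int. k > 0 \<and> a > 0 \<and> (2 * a + 1) dvd k \<and> \<not> k dvd a \<and> \<not> k dvd (a + 1)
               \<longrightarrow> cay_Zk k (- a) (a + 1)"
    and gen: "gen_subgroup {a, b} = UNIV"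
    and two: "a \<noteq> b"
    and nontriv: "a \<noteq> 0" "b \<noteq> 0"
  shows "cay_grp a b"
proof -
  obtain m n z \<phi> where m: "m \<ge> 1" and n: "n > 0" and bij: "bij_betw \<phi> (torV m n) (UNIV :: 'g set)"
    and comm: "\<forall>v\<in>torV m n. \<phi> (tor_a m n z v) = \<phi> v + a \<and> \<phi> (tor_b m n z v) = \<phi> v + b"
    using G_model[OF gen] by blast
  have nd: "\<not> (m = 1 \<and> (z mod n = 0 \<or> (z + 1) mod n = 0))"
  proof
    assume h: "m = 1 \<and> (z mod n = 0 \<or> (z + 1) mod n = 0)"
    have v0: "(0, 0) \<in> torV m n" using m n unfolding torV_def by auto
    show False using h
    proof (elim conjE disjE)
      assume "m = 1" "z mod n = 0"
      then have "tor_a m n z (0, 0) = (0, 0)" unfolding tor_a_def by simp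
      then have "\<phi> (0, 0) = \<phi> (0, 0) + a" using comm v0 by metis
      then show False using nontriv(1) by simp
    next
      assume "m = 1" "(z + 1) mod n = 0"
      then have "tor_b m n z (0, 0) = (0, 0)" unfolding tor_b_def by simp
      then have "\<phi> (0, 0) = \<phi> (0, 0) + b" using comm v0 by metis
      then show False using nontriv(2) by simp
    qed
  qed
  have g: "good m n z" by (rule all_good[OF m n H1 H2 nd])
  show ?thesis unfolding cay_grp_def
  proof (rule iso_transfer[OF bij])
    show "two_arc_disjoint_ham_paths (torV m n) (tor_a m n z) (tor_b m n z)" using g unfolding good_def .
    show "\<And>v. v \<in> torV m n \<Longrightarrow> \<phi> (tor_a m n z v) = \<phi> v + a" using comm by blast
    show "\<And>v. v \<in> torV m n \<Longrightarrow> \<phi> (tor_b m n z v) = \<phi> v + b" using comm by blast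
  qed
qed

end
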